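(* Let $X$ be a reflexive Banach space, let $R:X\to X$ be a bounded linear isomorphism of $X$ onto $X$, and let $L:X\times X^*\to\mathbb{R}\cup\{+\infty\}$ be convex, lower semicontinuous and not identically $+\infty$. Assume $L$ is partially $R$-antiselfdual, i.e. $L^*(0,x)=L(-Rx,0)$ for all $x\in X$, and that for some $x_0\in X$ the function $p\mapsto L(x_0,p)$ is bounded above on a neighborhood of the origin in $X^*$. Then there exists $\bar x\in X$ such that $$L(-R\bar x,0)=\inf_{x\in X}L(x,0)=0\qquad\text{and}\qquad (0,\bar x)\in\partial L(-R\bar x,0).$$
   Context: For a function $L$ on $X\times X^*$, its Legendre–Fenchel transform (in both variables) is $L^*(q,y)=\sup\{\langle q,x\rangle+\langle y,p\rangle-L(x,p):x\in X,\ p\in X^*\}$ for $(q,y)\in X^*\times X$ (with $X^{**}=X$). $\partial L$ denotes the convex subdifferential of $L$ on $X\times X^*$, with values in $X^*\times X$. *)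

theory Defs
  imports "HOL-Analysis.Analysis"
begin

text \<open>The dual space X* of a real Banach space X is modelled by the type of bounded
  linear functionals  'a \<Rightarrow>L real  (with the operator norm), the duality pairing
  being application.\<close>

definition reflexive_space :: "'a::real_normed_vector itself \<Rightarrow> bool" where
  "reflexive_space _ \<longleftrightarrow>
     (\<forall>\<phi> :: ('a \<Rightarrow>\<^sub>L real) \<Rightarrow>\<^sub>L real. \<exists>x::'a. \<forall>f. blinfun_apply \<phi> f = blinfun_apply f x)"

text \<open>Convexity of an extended-real valued function (never equal to minus infinity).\<close>
definition ereal_convex :: "('v::real_vector \<Rightarrow> ereal) \<Rightarrow> bool" where
  "ereal_convex F \<longleftrightarrow>
     (\<forall>u v. \<forall>t::real. 0 < t \<and> t < 1 \<longrightarrow>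
        F (t *\<^sub>R u + (1 - t) *\<^sub>R v) \<le> ereal t * F u + ereal (1 - t) * F v)"

definition ereal_lsc :: "('v::topological_space \<Rightarrow> ereal) \<Rightarrow> bool" where
  "ereal_lsc F \<longleftrightarrow> (\<forall>c::real. closed {z. F z \<le> ereal c})"

text \<open>Legendre--Fenchel transform in both variables, on X* \<times> X (using X** = X).\<close>
definition legendre ::
  "('a::real_normed_vector \<times> ('a \<Rightarrow>\<^sub>L real) \<Rightarrow> ereal) \<Rightarrow> ('a \<Rightarrow>\<^sub>L real) \<times> 'a \<Rightarrow> ereal" where
  "legendre L = (\<lambda>(q, y). SUP (x, p) \<in> UNIV. ereal (blinfun_apply q x + blinfun_apply p y) - L (x, p))"

definition subdiff ::
  "('a::real_normed_vector \<times> ('a \<Rightarrow>\<^sub>L real) \<Rightarrow> ereal) \<Rightarrow> 'a \<times> ('a \<Rightarrow>\<^sub>L real) \<Rightarrow> (('a \<Rightarrow>\<^sub>L real) \<times> 'a) set" where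
  "subdiff L = (\<lambda>(x, p). {(q, y). L (x, p) \<noteq> \<infinity> \<and>
      (\<forall>x' p'. L (x', p') \<ge> L (x, p) + ereal (blinfun_apply q (x' - x) + blinfun_apply (p' - p) y))})"

end

theory Submission
  imports Defs
begin

definition lg :: "('w::real_vector \<times> real) set \<Rightarrow> bool" where
  "lg G \<longleftrightarrow> (0,0) \<in> G \<and> (\<forall>x t y s. (x,t)\<in>G \<longrightarrow> (y,s)\<in>G \<longrightarrow> (x+y,t+s)\<in>G)
     \<and> (\<forall>c x t. (x,t)\<in>G \<longrightarrow> (c *\<^sub>R x, c*t) \<in> G)"

definition sv :: "('w::real_vector \<times> real) set \<Rightarrow> bool" where
  "sv G \<longleftrightarrow> (\<forall>t. (0,t)\<in>G \<longrightarrow> t = 0)"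

definition dm :: "('w::real_vector \<Rightarrow> ereal) \<Rightarrow> ('w \<times> real) set \<Rightarrow> bool" where
  "dm g G \<longleftrightarrow> (\<forall>x t. (x,t)\<in>G \<longrightarrow> ereal t \<le> g x)"

lemma convex_fin:
  assumes "ereal_convex g" "0 < l" "l < 1" "g u = ereal a" "g w = ereal b"
  shows "g (l *\<^sub>R u + (1 - l) *\<^sub>R w) \<le> ereal (l*a + (1-l)*b)"
  using assms unfolding ereal_convex_def
  by (metis plus_ereal.simps(1) times_ereal.simps(1))

lemma key_ineq:
  fixes g :: "'w::real_vector \<Rightarrow> ereal"
  assumes conv: "ereal_convex g" and L: "lg G" and D: "dm g G"
    and m1: "(x1,t1)\<in>G" and m2: "(x2,t2)\<in>G" and a: "a>0" and b: "b>0"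
    and g1: "g (x1 - b *\<^sub>R v) = ereal g1" and g2: "g (x2 + a *\<^sub>R v) = ereal g2"
  shows "(t1 - g1)/b \<le> (g2 - t2)/a"
proof -
  define l where "l = a/(a+b)"
  have l0: "0<l" "l<1" using a b by (auto simp: l_def field_simps)
  have lb: "(1-l)*a = l*b" using a b by (simp add: l_def field_simps)
  have veq: "l *\<^sub>R (x1 - b *\<^sub>R v) + (1-l) *\<^sub>R (x2 + a *\<^sub>R v) = l *\<^sub>R x1 + (1-l) *\<^sub>R x2"
  proof -
    have "l *\<^sub>R (x1 - b *\<^sub>R v) + (1-l) *\<^sub>R (x2 + a *\<^sub>R v)
        = l *\<^sub>R x1 + (1-l) *\<^sub>R x2 + (((1-l)*a) *\<^sub>R v - (l*b) *\<^sub>R v)"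
      by (simp add: algebra_simps)
    then show ?thesis using lb by simp
  qed
  have "(l *\<^sub>R x1, l*t1) \<in> G" "((1-l) *\<^sub>R x2, (1-l)*t2) \<in> G" using L m1 m2 unfolding lg_def by auto
  then have "(l *\<^sub>R x1 + (1-l) *\<^sub>R x2, l*t1 + (1-l)*t2) \<in> G" using L unfolding lg_def by blast
  then have "ereal (l*t1 + (1-l)*t2) \<le> g (l *\<^sub>R x1 + (1-l) *\<^sub>R x2)" using D unfolding dm_def by blast
  also have "\<dots> \<le> ereal (l*g1 + (1-l)*g2)"
    using convex_fin[OF conv l0 g1 g2] veq by simp
  finally have "l*t1 + (1-l)*t2 \<le> l*g1 + (1-l)*g2" by simp
  moreover have l1: "1 - l = b/(a+b)" using a b by (simp add: l_def field_simps)
  moreover have "l*t1 + (1-l)*t2 = (a*t1 + b*t2)/(a+b)" "l*g1 + (1-l)*g2 = (a*g1 + b*g2)/(a+b)"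
    unfolding l1 by (simp_all add: l_def add_divide_distrib)
  ultimately have "(a*t1 + b*t2)/(a+b) \<le> (a*g1 + b*g2)/(a+b)" by simp
  then have "a*t1 + b*t2 \<le> a*g1 + b*g2" using a b by (simp add: divide_right_mono_neg  divide_le_cancel)
  then show ?thesis using a b by (simp add: field_simps)
qed

lemma extend:
  fixes g :: "'w::real_vector \<Rightarrow> ereal"
  assumes conv: "ereal_convex g" and nm: "\<forall>z. g z \<noteq> -\<infinity>"
    and L: "lg G" and S: "sv G" and D: "dm g G"
    and core: "\<forall>w. \<exists>x t a. (x,t)\<in>G \<and> a > 0 \<and> g (x + a *\<^sub>R w) \<noteq> \<infinity>"
    and nv: "\<forall>t. (v,t) \<notin> G"
  shows "\<exists>G'. lg G' \<and> sv G' \<and> dm g G' \<and> G \<subseteq> G' \<and> G' \<noteq> G"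
proof -
  define lo where "lo = {(t1 - real_of_ereal (g (x1 - b *\<^sub>R v))) / b | x1 t1 b.
      (x1,t1)\<in>G \<and> b>0 \<and> g (x1 - b *\<^sub>R v) \<noteq> \<infinity>}"
  define hi where "hi = {(real_of_ereal (g (x2 + a *\<^sub>R v)) - t2) / a | x2 t2 a.
      (x2,t2)\<in>G \<and> a>0 \<and> g (x2 + a *\<^sub>R v) \<noteq> \<infinity>}"
  have fin: "g z \<noteq> \<infinity> \<Longrightarrow> g z = ereal (real_of_ereal (g z))" for z
    using nm by (cases "g z") auto
  have lohi: "l \<le> h" if lh: "l \<in> lo" "h \<in> hi" for l h
  proof -
    obtain x1 t1 b where 1: "l = (t1 - real_of_ereal (g (x1 - b *\<^sub>R v))) / b" "(x1,t1)\<in>G" "b>0"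
      "g (x1 - b *\<^sub>R v) \<noteq> \<infinity>" using lh(1) unfolding lo_def by blast
    obtain x2 t2 a where 2: "h = (real_of_ereal (g (x2 + a *\<^sub>R v)) - t2) / a" "(x2,t2)\<in>G" "a>0"
      "g (x2 + a *\<^sub>R v) \<noteq> \<infinity>" using lh(2) unfolding hi_def by blast
    show ?thesis unfolding 1(1) 2(1)
      by (rule key_ineq[OF conv L D 1(2) 2(2) 2(3) 1(3) fin[OF 1(4)] fin[OF 2(4)]])
  qed
  have "\<exists>x t a. (x,t)\<in>G \<and> a > 0 \<and> g (x + a *\<^sub>R v) \<noteq> \<infinity>" using core by (rule spec)
  then obtain x2 t2 a where o2: "(x2,t2)\<in>G" "a>0" "g (x2 + a *\<^sub>R v) \<noteq> \<infinity>" by (elim exE conjE)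
  have "(real_of_ereal (g (x2 + a *\<^sub>R v)) - t2) / a \<in> hi" unfolding hi_def mem_Collect_eq
    by (rule exI[of _ x2], rule exI[of _ t2], rule exI[of _ a]) (simp add: o2)
  then have hne: "hi \<noteq> {}" by blast
  have "\<exists>x t a. (x,t)\<in>G \<and> a > 0 \<and> g (x + a *\<^sub>R (-v)) \<noteq> \<infinity>" using core by (rule spec)
  then obtain x1 t1 b where o1: "(x1,t1)\<in>G" "b>0" "g (x1 + b *\<^sub>R (-v)) \<noteq> \<infinity>" by (elim exE conjE)
  then have o1': "g (x1 - b *\<^sub>R v) \<noteq> \<infinity>" by simp
  have "(t1 - real_of_ereal (g (x1 - b *\<^sub>R v))) / b \<in> lo" unfolding lo_def mem_Collect_eq
    by (rule exI[of _ x1], rule exI[of _ t1], rule exI[of _ b]) (simp add: o1 o1')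
  then have lne: "lo \<noteq> {}" by blast
  define c where "c = Sup lo"
  obtain h0 where "h0 \<in> hi" using hne by blast
  then have bdd: "bdd_above lo" using lohi by (intro bdd_aboveI[of _ h0]) blast
  have lc: "l \<le> c" if "l \<in> lo" for l unfolding c_def using cSup_upper[OF that bdd] .
  have ch: "c \<le> h" if hh: "h \<in> hi" for h unfolding c_def
    by (rule cSup_least[OF lne]) (rule lohi[OF _ hh])
  define G' where "G' = {(x + a *\<^sub>R v, t + a*c) | x t a. (x,t)\<in>G}"
  have G'I: "(x + a *\<^sub>R v, t + a*c) \<in> G'" if "(x,t)\<in>G" for x t a
    unfolding G'_def using that by blast
  have G'E: "\<exists>x t a. z = x + a *\<^sub>R v \<and> s = t + a*c \<and> (x,t)\<in>G" if "(z,s)\<in>G'" for z s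
  proof -
    have "\<exists>x t a. (z,s) = (x + a *\<^sub>R v, t + a*c) \<and> (x,t)\<in>G"
      using that unfolding G'_def by (rule CollectD)
    then obtain x t a where "(z,s) = (x + a *\<^sub>R v, t + a*c)" "(x,t)\<in>G" by (elim exE conjE)
    then show ?thesis by (intro exI[of _ x] exI[of _ t] exI[of _ a]) simp
  qed
  have "lg G'"
    unfolding lg_def
  proof (intro conjI allI impI)
    have "(0,0)\<in>G" using L unfolding lg_def by blast
    from G'I[OF this, of 0] show "(0,0) \<in> G'" by simp
  next
    fix x t y s assume "(x,t)\<in>G'" "(y,s)\<in>G'"
    then obtain x' t' a' y' s' b' where "x = x' + a' *\<^sub>R v" "t = t' + a'*c" "(x',t')\<in>G"
      "y = y' + b' *\<^sub>R v" "s = s' + b'*c" "(y',s')\<in>G" by (blast dest: G'E)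
    moreover then have m: "(x'+y', t'+s') \<in> G" using L unfolding lg_def by blast
    moreover have eq: "(x+y,t+s) = ((x'+y') + (a'+b') *\<^sub>R v, (t'+s') + (a'+b')*c)"
      using calculation by (simp add: algebra_simps)
    show "(x+y, t+s) \<in> G'" unfolding eq by (rule G'I[OF m])
  next
    fix k x t assume "(x,t)\<in>G'"
    then obtain x' t' a' where "x = x' + a' *\<^sub>R v" "t = t' + a'*c" "(x',t')\<in>G"
      by (blast dest: G'E)
    moreover then have m: "(k *\<^sub>R x', k*t') \<in> G" using L unfolding lg_def by blast
    moreover have eq: "(k *\<^sub>R x, k*t) = (k *\<^sub>R x' + (k*a') *\<^sub>R v, k*t' + (k*a')*c)"
      using calculation by (simp add: algebra_simps)
    show "(k *\<^sub>R x, k*t) \<in> G'" unfolding eq by (rule G'I[OF m])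
  qed
  moreover have "sv G'"
    unfolding sv_def
  proof (intro allI impI)
    fix s assume "(0,s) \<in> G'"
    then obtain x t a where e: "0 = x + a *\<^sub>R v" "s = t + a*c" "(x,t)\<in>G" by (blast dest: G'E)
    show "s = 0"
    proof (cases "a = 0")
      case True then show ?thesis using e S unfolding sv_def by auto
    next
      case False
      have "((-1/a) *\<^sub>R x, (-1/a)*t) \<in> G" using e L unfolding lg_def by blast
      moreover have "(-1/a) *\<^sub>R x = v"
      proof -
        have "x = - (a *\<^sub>R v)" using e(1) by (metis add_eq_0_iff2)
        then show ?thesis using False by simp
      qed
      ultimately show ?thesis using nv by auto
    qed
  qed
  moreover have "dm g G'"
    unfolding dm_def
  proof (intro allI impI)
    fix z s assume "(z,s) \<in> G'"
    then obtain x t a where e: "z = x + a *\<^sub>R v" "s = t + a*c" "(x,t)\<in>G" by (blast dest: G'E)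
    show "ereal s \<le> g z"
    proof (cases "g z = \<infinity>")
      case True then show ?thesis by simp
    next
      case gf: False
      consider "a = 0" | "a > 0" | "a < 0" by linarith
      then show ?thesis
      proof cases
        case 1 then show ?thesis using e D unfolding dm_def by auto
      next
        case 2
        have "(real_of_ereal (g z) - t) / a \<in> hi" unfolding hi_def mem_Collect_eq
          by (rule exI[of _ x], rule exI[of _ t], rule exI[of _ a]) (use e 2 gf in simp)
        then have "c \<le> (real_of_ereal (g z) - t) / a" by (rule ch)
        then have "a*c \<le> real_of_ereal (g z) - t" using 2 by (simp add: field_simps)
        then have "ereal s \<le> ereal (real_of_ereal (g z))" using e(2) by simp
        also have "\<dots> = g z" by (rule fin[OF gf, symmetric])
        finally show ?thesis .
      next
        case 3
        have zz: "z = x - (-a) *\<^sub>R v" using e by simp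
        have "(t - real_of_ereal (g z)) / (-a) \<in> lo" unfolding lo_def mem_Collect_eq
          by (rule exI[of _ x], rule exI[of _ t], rule exI[of _ "-a"]) (use zz 3 gf e(3) in simp)
        then have "(t - real_of_ereal (g z)) / (-a) \<le> c" by (rule lc)
        then have "t - real_of_ereal (g z) \<le> (-a)*c" using 3 by (simp add: field_simps)
        then have "ereal s \<le> ereal (real_of_ereal (g z))" using e(2) by simp
        also have "\<dots> = g z" by (rule fin[OF gf, symmetric])
        finally show ?thesis .
      qed
    qed
  qed
  moreover have "G \<subseteq> G'"
  proof
    fix z assume "z \<in> G"
    then show "z \<in> G'" using G'I[of "fst z" "snd z" 0] by simp
  qed
  moreover have "(v,c) \<in> G'"
  proof -
    have "(0,0)\<in>G" using L unfolding lg_def by blast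
    from G'I[OF this, of 1] show ?thesis by simp
  qed
  moreover have "G' \<noteq> G" using nv \<open>(v,c) \<in> G'\<close> by blast
  ultimately show ?thesis by blast
qed

lemma HB:
  fixes g :: "'w::real_vector \<Rightarrow> ereal" and G0 :: "('w \<times> real) set"
  assumes conv: "ereal_convex g" and nm: "\<forall>z. g z \<noteq> -\<infinity>"
    and L0: "lg G0" and S0: "sv G0" and D0: "dm g G0"
    and core: "\<forall>w. \<exists>x t a. (x,t)\<in>G0 \<and> a > 0 \<and> g (x + a *\<^sub>R w) \<noteq> \<infinity>"
  shows "\<exists>f. linear f \<and> (\<forall>z. ereal (f z) \<le> g z) \<and> (\<forall>x t. (x,t)\<in>G0 \<longrightarrow> f x = t)"
proof -
  define A where "A = {G. lg G \<and> sv G \<and> dm g G \<and> G0 \<subseteq> G}"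
  have "\<forall>C\<in>chains A. \<exists>U\<in>A. \<forall>X\<in>C. X \<subseteq> U"
  proof
    fix C assume C: "C \<in> chains A"
    show "\<exists>U\<in>A. \<forall>X\<in>C. X \<subseteq> U"
    proof (cases "C = {}")
      case True then show ?thesis using L0 S0 D0 unfolding A_def by auto
    next
      case False
      have CA: "C \<subseteq> A" using C by (rule chainsD2)
      have tot: "X \<subseteq> Y \<or> Y \<subseteq> X" if "X\<in>C" "Y\<in>C" for X Y using chainsD[OF C that] .
      obtain X0 where X0: "X0 \<in> C" using False by blast
      have "\<Union>C \<in> A" unfolding A_def mem_Collect_eq lg_def sv_def dm_def
      proof (intro conjI allI impI)
        show "(0,0) \<in> \<Union>C" using CA X0 unfolding A_def lg_def by blast
      next
        fix x t y s assume "(x,t) \<in> \<Union>C" "(y,s) \<in> \<Union>C"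
        then obtain X Y where XY: "X\<in>C" "Y\<in>C" "(x,t)\<in>X" "(y,s)\<in>Y" by blast
        then obtain Z where "Z\<in>C" "(x,t)\<in>Z" "(y,s)\<in>Z" using tot[OF XY(1,2)] by blast
        moreover then have "lg Z" using CA unfolding A_def by blast
        ultimately show "(x+y,t+s) \<in> \<Union>C" unfolding lg_def by blast
      next
        fix k x t assume "(x,t) \<in> \<Union>C"
        then obtain Z where "Z\<in>C" "(x,t)\<in>Z" by blast
        moreover then have "lg Z" using CA unfolding A_def by blast
        ultimately show "(k *\<^sub>R x, k*t) \<in> \<Union>C" unfolding lg_def by blast
      next
        fix t assume "(0,t) \<in> \<Union>C"
        then obtain Z where "Z\<in>C" "(0,t)\<in>Z" by blast
        moreover then have "sv Z" using CA unfolding A_def by blast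
        ultimately show "t = 0" unfolding sv_def by blast
      next
        fix x t assume "(x,t) \<in> \<Union>C"
        then obtain Z where "Z\<in>C" "(x,t)\<in>Z" by blast
        moreover then have "dm g Z" using CA unfolding A_def by blast
        ultimately show "ereal t \<le> g x" unfolding dm_def by blast
      next
        show "G0 \<subseteq> \<Union>C" using CA X0 unfolding A_def by blast
      qed
      then show ?thesis by blast
    qed
  qed
  from Zorn_Lemma2[OF this] obtain M where MA: "M \<in> A" and Mmax: "\<forall>X\<in>A. M \<subseteq> X \<longrightarrow> X = M"
    by blast
  have Mlg: "lg M" and Msv: "sv M" and Mdm: "dm g M" and G0M: "G0 \<subseteq> M" using MA unfolding A_def by auto
  have coreM: "\<forall>w. \<exists>x t a. (x,t)\<in>M \<and> a > 0 \<and> g (x + a *\<^sub>R w) \<noteq> \<infinity>"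
  proof
    fix w
    have "\<exists>x t a. (x,t)\<in>G0 \<and> a > 0 \<and> g (x + a *\<^sub>R w) \<noteq> \<infinity>" using core by (rule spec)
    then obtain x t a where "(x,t)\<in>G0" "a > 0" "g (x + a *\<^sub>R w) \<noteq> \<infinity>" by (elim exE conjE)
    then show "\<exists>x t a. (x,t)\<in>M \<and> a > 0 \<and> g (x + a *\<^sub>R w) \<noteq> \<infinity>"
      using G0M by (intro exI[of _ x] exI[of _ t] exI[of _ a]) auto
  qed
  have tot: "\<exists>t. (v,t) \<in> M" for v
  proof (rule ccontr)
    assume "\<not> (\<exists>t. (v,t) \<in> M)"
    then have nv: "\<forall>t. (v,t) \<notin> M" by blast
    from extend[OF conv nm Mlg Msv Mdm coreM nv] obtain G' where
      G': "lg G'" "sv G'" "dm g G'" "M \<subseteq> G'" "G' \<noteq> M" by blast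
    then have "G' \<in> A" using G0M unfolding A_def by blast
    then show False using Mmax G' by blast
  qed
  define f where "f v = (SOME t. (v,t)\<in>M)" for v
  have fM: "(v, f v) \<in> M" for v unfolding f_def using tot[of v] by (rule someI_ex)
  have uniq: "f v = t" if "(v,t)\<in>M" for v t
  proof -
    have "((-1) *\<^sub>R v, (-1) * f v) \<in> M" using fM Mlg unfolding lg_def by blast
    then have "(v + (-1) *\<^sub>R v, t + (-1) * f v) \<in> M" using that Mlg unfolding lg_def by blast
    then have "(0, t - f v) \<in> M" by simp
    then show ?thesis using Msv unfolding sv_def by force
  qed
  have "linear f"
  proof (rule linearI)
    fix x y
    have "(x+y, f x + f y) \<in> M" using fM Mlg unfolding lg_def by blast
    then show "f (x+y) = f x + f y" by (rule uniq)
  next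
    fix r x
    have "(r *\<^sub>R x, r * f x) \<in> M" using fM Mlg unfolding lg_def by blast
    then show "f (r *\<^sub>R x) = r *\<^sub>R f x" using uniq by simp
  qed
  moreover have "\<forall>z. ereal (f z) \<le> g z" using fM Mdm unfolding dm_def by blast
  moreover have "\<forall>x t. (x,t)\<in>G0 \<longrightarrow> f x = t" using G0M uniq by blast
  ultimately show ?thesis by blast
qed

lemma bl_from_ball:
  fixes \<phi> :: "'v::real_normed_vector \<Rightarrow> real"
  assumes lin: "linear \<phi>" and r: "r > 0" and B: "\<forall>p. norm p < r \<longrightarrow> \<phi> p \<le> M"
  shows "bounded_linear \<phi>"
proof -
  have M0: "0 \<le> M" using B r linear_0[OF lin] by (metis norm_zero)
  have bnd: "norm (\<phi> p) \<le> norm p * (2*M/r)" for p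
  proof (cases "p = 0")
    case True then show ?thesis using linear_0[OF lin] by simp
  next
    case False
    define k where "k = r/(2*norm p)"
    have k: "k > 0" using r False by (simp add: k_def)
    have nq: "norm (k *\<^sub>R p) < r" "norm (- (k *\<^sub>R p)) < r" using r False by (simp_all add: k_def)
    have "\<phi> (k *\<^sub>R p) = k * \<phi> p" using linear_scale[OF lin] by simp
    moreover have "\<phi> (- (k *\<^sub>R p)) = - (k * \<phi> p)" using linear_scale[OF lin] linear_neg[OF lin] by simp
    ultimately have "k * \<phi> p \<le> M" "- (k * \<phi> p) \<le> M" using B nq by metis+
    then have "k * \<bar>\<phi> p\<bar> \<le> M" using k by (simp add: abs_if)
    then have "\<bar>\<phi> p\<bar> \<le> M / k" using k by (simp add: field_simps)
    also have "M / k = norm p * (2*M/r)" using r False by (simp add: k_def field_simps)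
    finally show ?thesis by simp
  qed
  show ?thesis
    by (rule bounded_linear_intro[where K="2*M/r"], rule linear_add[OF lin], rule linear_scale[OF lin], rule bnd)
qed

theorem proposition2p1:
  fixes R :: "'a::banach \<Rightarrow>\<^sub>L 'a"
    and L :: "'a \<times> ('a \<Rightarrow>\<^sub>L real) \<Rightarrow> ereal"
  assumes refl: "reflexive_space TYPE('a)"
    and R_iso: "bij (blinfun_apply R)"
    and L_proper: "\<forall>z. L z \<noteq> -\<infinity>" "\<exists>z. L z \<noteq> \<infinity>"
    and L_convex: "ereal_convex L"
    and L_lsc: "ereal_lsc L"
    and L_anti: "\<forall>x. legendre L (0, x) = L (- blinfun_apply R x, 0)"
    and L_bdd: "\<exists>x0 U. open U \<and> (0::'a \<Rightarrow>\<^sub>L real) \<in> U \<and> (\<exists>M::real. \<forall>p\<in>U. L (x0, p) \<le> ereal M)"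
  shows "\<exists>xb. L (- blinfun_apply R xb, 0) = 0 \<and> (INF x. L (x, 0)) = 0
              \<and> (0, xb) \<in> subdiff L (- blinfun_apply R xb, 0)"
proof -
  have leg_ge: "ereal (blinfun_apply p y) - L (x, p) \<le> legendre L (0, y)" for x p y
  proof -
    have "ereal (blinfun_apply 0 x + blinfun_apply p y) - L (x, p)
        \<le> (SUP (x, p) \<in> UNIV. ereal (blinfun_apply 0 x + blinfun_apply p y) - L (x, p))"
      by (rule SUP_upper2[of "(x,p)"]) auto
    then show ?thesis unfolding legendre_def by simp
  qed
  have nonneg: "0 \<le> L (x, 0)" for x
  proof -
    define y where "y = inv (blinfun_apply R) (- x)"
    have Ry: "- blinfun_apply R y = x" unfolding y_def using surj_f_inv_f[OF bij_is_surj[OF R_iso], of "-x"] by simp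
    have "- L (x, 0) \<le> legendre L (0, y)" using leg_ge[of 0 y x] by (simp add: zero_ereal_def[symmetric])
    also have "\<dots> = L (x, 0)" using L_anti Ry by simp
    finally have "- L (x,0) \<le> L (x,0)" .
    then show ?thesis using L_proper(1) by (cases "L (x,0)") auto
  qed
  obtain x0 U M where U: "open U" "(0::'a \<Rightarrow>\<^sub>L real) \<in> U" and UM: "\<forall>p\<in>U. L (x0, p) \<le> ereal M"
    using L_bdd by blast
  obtain r where r: "r > 0" "ball 0 r \<subseteq> U" using U open_contains_ball by blast
  have LM: "L (x0, p) \<le> ereal M" if "norm p < r" for p
    using UM r(2) that by (auto simp: dist_norm)
  define G0 :: "(('a \<times> ('a \<Rightarrow>\<^sub>L real)) \<times> real) set" where "G0 = {(z,t). snd z = 0 \<and> t = 0}"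
  have L0: "lg G0" unfolding lg_def G0_def by auto
  have S0: "sv G0" unfolding sv_def G0_def by auto
  have D0: "dm L G0" unfolding dm_def G0_def
  proof (intro allI impI)
    fix z :: "'a \<times> ('a \<Rightarrow>\<^sub>L real)" and t :: real assume "(z,t) \<in> {(z,t). snd z = 0 \<and> t = 0}"
    then have "z = (fst z, 0)" "t = 0" by (auto simp: prod_eq_iff)
    then show "ereal t \<le> L z" using nonneg[of "fst z"] by (metis zero_ereal_def)
  qed
  have core: "\<forall>w. \<exists>x t a. (x,t)\<in>G0 \<and> a > 0 \<and> L (x + a *\<^sub>R w) \<noteq> \<infinity>"
  proof
    fix w :: "'a \<times> ('a \<Rightarrow>\<^sub>L real)"
    obtain u e where w: "w = (u,e)" by (cases w)
    define a where "a = r / (2 * (norm e + 1))"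
    have "2 * (norm e + 1) > 0" by (simp add: add_nonneg_pos)
    then have a: "a > 0" using r unfolding a_def by (intro divide_pos_pos)
    have "a * norm e < r"
    proof -
      have "a * norm e \<le> a * (norm e + 1)" using a by simp
      also have "\<dots> = r/2"
      proof -
        have "0 \<le> norm e" by simp
        then have n1: "norm e + 1 \<noteq> 0" by linarith
        show ?thesis unfolding a_def using n1 by (simp add: divide_simps)
      qed
      finally show ?thesis using r by simp
    qed
    then have "norm (a *\<^sub>R e) < r" using a by simp
    then have "L (x0, a *\<^sub>R e) \<le> ereal M" by (rule LM)
    then have "L (x0, a *\<^sub>R e) \<noteq> \<infinity>" by auto
    moreover have "(x0 - a *\<^sub>R u, 0) + a *\<^sub>R w = (x0, a *\<^sub>R e)" using w by simp
    moreover have "((x0 - a *\<^sub>R u, 0 :: 'a \<Rightarrow>\<^sub>L real), 0) \<in> G0" unfolding G0_def by simp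
    ultimately show "\<exists>x t a. (x,t)\<in>G0 \<and> a > 0 \<and> L (x + a *\<^sub>R w) \<noteq> \<infinity>" using a
      by (intro exI[of _ "(x0 - a *\<^sub>R u, 0)"] exI[of _ 0] exI[of _ a]) simp
  qed
  obtain f where lin: "linear f" and fL: "\<forall>z. ereal (f z) \<le> L z" and f0: "\<forall>x t. (x,t)\<in>G0 \<longrightarrow> f x = t"
    using HB[OF L_convex L_proper(1) L0 S0 D0 core] by blast
  have fx0: "f (x, 0) = 0" for x using f0 unfolding G0_def by auto
  define \<phi> where "\<phi> p = f (0, p)" for p :: "'a \<Rightarrow>\<^sub>L real"
  have fsplit: "f (x, p) = \<phi> p" for x p
  proof -
    have e: "(x, p) = (x,0) + (0,p)" by simp
    have "f (x, p) = f (x,0) + f (0,p)" unfolding e by (rule linear_add[OF lin])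
    then show ?thesis using fx0 unfolding \<phi>_def by simp
  qed
  have linphi: "linear \<phi>"
  proof (rule linearI)
    fix p q :: "'a \<Rightarrow>\<^sub>L real"
    have e: "(0::'a, p + q) = (0,p) + (0,q)" by simp
    show "\<phi> (p + q) = \<phi> p + \<phi> q" unfolding \<phi>_def e by (rule linear_add[OF lin])
  next
    fix c :: real and p :: "'a \<Rightarrow>\<^sub>L real"
    have e: "(0::'a, c *\<^sub>R p) = c *\<^sub>R (0,p)" by simp
    show "\<phi> (c *\<^sub>R p) = c *\<^sub>R \<phi> p" unfolding \<phi>_def e by (rule linear_scale[OF lin])
  qed
  have "\<forall>p. norm p < r \<longrightarrow> \<phi> p \<le> M"
  proof (intro allI impI)
    fix p :: "'a \<Rightarrow>\<^sub>L real" assume "norm p < r"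
    then have "ereal (f (x0, p)) \<le> ereal M" using fL LM order_trans by blast
    then show "\<phi> p \<le> M" using fsplit by simp
  qed
  then have blphi: "bounded_linear \<phi>" by (rule bl_from_ball[OF linphi r(1)])
  obtain y where y: "\<forall>p. blinfun_apply (Blinfun \<phi>) p = blinfun_apply p y"
    using refl unfolding reflexive_space_def by blast
  have phiy: "\<phi> p = blinfun_apply p y" for p
    using y bounded_linear_Blinfun_apply[OF blphi] by simp
  have Lge: "ereal (blinfun_apply p y) \<le> L (x, p)" for x p
  proof -
    have "ereal (f (x,p)) \<le> L (x,p)" using fL by blast
    then show ?thesis using fsplit phiy by simp
  qed
  have "legendre L (0, y) \<le> 0"
    unfolding legendre_def
  proof (simp only: case_prod_conv, rule SUP_least, clarify)
    fix x p
    show "ereal (blinfun_apply 0 x + blinfun_apply p y) - L (x, p) \<le> 0"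
      using Lge[of p x] L_proper(1) by (cases "L (x,p)") auto
  qed
  then have e0: "L (- blinfun_apply R y, 0) = 0"
  proof -
    have "L (- blinfun_apply R y, 0) = legendre L (0, y)" using L_anti by simp
    then show ?thesis using \<open>legendre L (0, y) \<le> 0\<close> nonneg[of "- blinfun_apply R y"] by simp
  qed
  have inf0: "(INF x. L (x, 0)) = 0"
  proof (rule order_antisym)
    have "(INF x. L (x, 0)) \<le> L (- blinfun_apply R y, 0)" by (rule INF_lower) simp
    then show "(INF x. L (x, 0)) \<le> 0" using e0 by simp
    show "0 \<le> (INF x. L (x, 0))" using nonneg by (rule INF_greatest)
  qed
  have "(0, y) \<in> subdiff L (- blinfun_apply R y, 0)"
    unfolding subdiff_def using e0 Lge by simp
  then show ?thesis using e0 inf0 by blast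
qed

end
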